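(* Let $a,A,b,B:\mathbb Z_{\ge0}\to R$ be any four functions with values in a commutative ring $R$, and work in the formal power series ring $R[[X]]$. Define $$F(a,A;b,B)=\sum_{K,L,M\ge0}a(K)A(K+M)b(L)B(L+M)X^{K+L+M},\qquad C(a,b)=\sum_{r\ge0}a(r)b(r)X^r.$$ Then $$F(a,A;b,B)+F(A,a;B,b)=C(A\star b,\,a\star B)+C(a,A)\,C(b,B),$$ where $\star$ denotes additive convolution, $(f\star g)(n)=\sum_{i+j=n}f(i)g(j)$.
   Context: All sums are over nonnegative integers; the identity is an equality of formal power series in $X$. *)

theory Defs
  imports "HOL-Computational_Algebra.Formal_Power_Series"
begin

definition conv :: "(nat \<Rightarrow> 'a::comm_ring) \<Rightarrow> (nat \<Rightarrow> 'a) \<Rightarrow> nat \<Rightarrow> 'a" where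
  "conv f g n = (\<Sum>(i, j) \<in> {(i, j). i + j = n}. f i * g j)"

definition Fser :: "(nat \<Rightarrow> 'a::comm_ring) \<Rightarrow> (nat \<Rightarrow> 'a) \<Rightarrow> (nat \<Rightarrow> 'a) \<Rightarrow> (nat \<Rightarrow> 'a) \<Rightarrow> 'a fps" where
  "Fser a A b B = Abs_fps (\<lambda>n. \<Sum>(K, L, M) \<in> {(K, L, M). K + L + M = n}.
       a K * A (K + M) * b L * B (L + M))"

definition Cser :: "(nat \<Rightarrow> 'a::comm_ring) \<Rightarrow> (nat \<Rightarrow> 'a) \<Rightarrow> 'a fps" where
  "Cser a b = Abs_fps (\<lambda>r. a r * b r)"

end

theory Submission
  imports Defs
begin

lemma finS: "finite {(K, L, M). K + L + (M::nat) = n}"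
proof -
  have "{(K, L, M). K + L + (M::nat) = n} \<subseteq> {..n} \<times> {..n} \<times> {..n}" by auto
  thus ?thesis by (rule finite_subset) auto
qed

lemma finT: "finite {(i, j). i + (j::nat) = n}"
proof -
  have "{(i, j). i + (j::nat) = n} \<subseteq> {..n} \<times> {..n}" by auto
  thus ?thesis by (rule finite_subset) auto
qed

theorem mainTheorem2:
  fixes a A b B :: "nat \<Rightarrow> 'r::comm_ring"
  shows "Fser a A b B + Fser A a B b = Cser (conv A b) (conv a B) + Cser a A * Cser b B"
proof (rule fps_ext)
  fix n
  define S where "S = {(K, L, M). K + L + (M::nat) = n}"
  define T where "T = {(i, j). i + (j::nat) = n}"
  define S2 where "S2 = {(K, L, M). K + L + (M::nat) = n \<and> M \<ge> 1}"
  define S0 where "S0 = {(K, L, M). K + L + (M::nat) = n \<and> M = 0}"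
  define U1 where "U1 = {((i,j),(p,q)). i + j = n \<and> q = n - p \<and> p \<le> (n::nat) \<and> p \<le> i}"
  define U2 where "U2 = {((i,j),(p,q)). j = n - i \<and> p + (q::nat) = n \<and> i \<le> n \<and> i < p}"
  have fS: "finite S" unfolding S_def by (rule finS)
  have fT: "finite T" unfolding T_def by (rule finT)
  have TT: "T \<times> T = U1 \<union> U2" "U1 \<inter> U2 = {}" unfolding T_def U1_def U2_def by auto
  have fU: "finite U1" "finite U2" using fT TT(1)
    by (metis finite_SigmaI finite_Un)+
  have SS: "S = S2 \<union> S0" "S2 \<inter> S0 = {}" unfolding S_def S2_def S0_def by auto
  have fS2: "finite S2" "finite S0" using fS SS(1) by (metis finite_Un)+
  define g where "g = (\<lambda>((i::nat,j::nat),(p::nat,q::nat)). A i * b j * (a p * B q))"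
  have prod: "conv A b n * conv a B n = sum g U1 + sum g U2"
  proof -
    have "conv A b n * conv a B n = (\<Sum>x\<in>T. \<Sum>y\<in>T. (case x of (i,j) \<Rightarrow> A i * b j) * (case y of (p,q) \<Rightarrow> a p * B q))"
      unfolding conv_def T_def by (simp add: sum_product)
    also have "\<dots> = sum g (T \<times> T)"
      by (simp add: sum.cartesian_product g_def case_prod_beta)
    also have "\<dots> = sum g U1 + sum g U2" using TT fU by (simp add: sum.union_disjoint)
    finally show ?thesis .
  qed
  have e1: "sum g U1 = (\<Sum>(K, L, M)\<in>S. a K * A (K + M) * b L * B (L + M))"
    unfolding g_def
    by (rule sum.reindex_bij_witness[where j="\<lambda>((i,j),(p,q)). (p, j, i - p)"
          and i="\<lambda>(K,L,M). ((K+M,L),(K,L+M))"]) (auto simp: S_def U1_def algebra_simps)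
  have e2: "sum g U2 = (\<Sum>(K, L, M)\<in>S2. A K * a (K + M) * B L * b (L + M))"
    unfolding g_def
    by (rule sum.reindex_bij_witness[where j="\<lambda>((i,j),(p,q)). (i, q, p - i)"
          and i="\<lambda>(K,L,M). ((K,L+M),(K+M,L))"]) (auto simp: S2_def U2_def algebra_simps)
  have e3: "(\<Sum>i=0..n. a i * A i * (b (n - i) * B (n - i)))
      = (\<Sum>(K, L, M)\<in>S0. A K * a (K + M) * B L * b (L + M))"
    by (rule sum.reindex_bij_witness[where i="\<lambda>(K,L,M). K"
          and j="\<lambda>i. (i, n - i, 0)"]) (auto simp: S0_def algebra_simps)
  have "fps_nth (Fser a A b B + Fser A a B b) n
     = (\<Sum>(K, L, M)\<in>S. a K * A (K + M) * b L * B (L + M))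
       + ((\<Sum>(K, L, M)\<in>S2. A K * a (K + M) * B L * b (L + M))
        + (\<Sum>(K, L, M)\<in>S0. A K * a (K + M) * B L * b (L + M)))"
  proof -
    have "(\<Sum>(K, L, M)\<in>S. A K * a (K + M) * B L * b (L + M)) =
      (\<Sum>(K, L, M)\<in>S2. A K * a (K + M) * B L * b (L + M))
        + (\<Sum>(K, L, M)\<in>S0. A K * a (K + M) * B L * b (L + M))"
      unfolding SS(1) using SS(2) fS2 by (simp add: sum.union_disjoint)
    thus ?thesis unfolding Fser_def fps_add_nth fps_nth_Abs_fps S_def by simp
  qed
  also have "\<dots> = fps_nth (Cser (conv A b) (conv a B) + Cser a A * Cser b B) n"
    unfolding Cser_def fps_add_nth fps_mult_nth fps_nth_Abs_fps prod e1 e2 e3[symmetric]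
    by (simp add: algebra_simps)
  finally show "fps_nth (Fser a A b B + Fser A a B b) n
     = fps_nth (Cser (conv A b) (conv a B) + Cser a A * Cser b B) n" .
qed

end
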